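(* Let $(X,\mathrm{dist})$ be a metric space, $\Sigma$ a metric space, and $\{U_\sigma(t,\tau)\}_{\sigma\in\Sigma}$ a family of processes on $X$. If the family is uniformly asymptotically compact, then $A^\star_\Sigma$ is a compact uniformly attracting set.
   Context: A process on $X$ is a family of maps $U(t,\tau):X\to X$, indexed by reals $t\ge\tau$, with $U(\tau,\tau)=\mathrm{id}_X$ and $U(t,\tau)=U(t,s)U(s,\tau)$ for $t\ge s\ge\tau$; no continuity is assumed. For nonempty $B,C\subset X$, $\delta_X(B,C)=\sup_{x\in B}\inf_{\xi\in C}\mathrm{dist}(x,\xi)$. A set $K\subset X$ is uniformly attracting if for every bounded $C\subset X$, $\lim_{t-\tau\to\infty}\sup_{\sigma\in\Sigma}\delta_X(U_\sigma(t,\tau)C,K)=0$. The family is uniformly asymptotically compact if there exists a compact uniformly attracting set. $\mathfrak{C}_\Sigma$ is the collection of all sequences $y_n=U_{\sigma_n}(t_n,\tau_n)x_n$ with $x_n$ a bounded sequence in $X$, $\sigma_n\in\Sigma$, $t_n-\tau_n\to\infty$, and $A^\star_\Sigma=\{x\in X: y_n\to x$ along a subsequence, for some $y_n\in\mathfrak{C}_\Sigma\}$. *)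

theory Defs
  imports "HOL-Analysis.Analysis"
begin

text \<open>A process on X (here X is the whole metric space type 'a): no continuity assumed.\<close>
definition process :: "(real \<Rightarrow> real \<Rightarrow> 'a \<Rightarrow> 'a) \<Rightarrow> bool" where
  "process U \<longleftrightarrow> (\<forall>\<tau>. U \<tau> \<tau> = id) \<and>
     (\<forall>t s \<tau>. \<tau> \<le> s \<and> s \<le> t \<longrightarrow> U t \<tau> = U t s \<circ> U s \<tau>)"

text \<open>Hausdorff semidistance delta_X(B,C) = sup_{x in B} inf_{xi in C} dist x xi,
  taken in the extended reals (so inf over empty C is +infinity).\<close>
definition semidist :: "'a::metric_space set \<Rightarrow> 'a set \<Rightarrow> ereal" where
  "semidist B C = (SUP x\<in>B. INF \<xi>\<in>C. ereal (dist x \<xi>))"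

definition unif_attracting ::
  "('s \<Rightarrow> real \<Rightarrow> real \<Rightarrow> 'a::metric_space \<Rightarrow> 'a) \<Rightarrow> 's set \<Rightarrow> 'a set \<Rightarrow> bool" where
  "unif_attracting U \<Sigma> K \<longleftrightarrow>
     (\<forall>C. bounded C \<and> C \<noteq> {} \<longrightarrow>
        (\<forall>e>0. \<exists>T. \<forall>t \<tau>. \<tau> \<le> t \<and> t - \<tau> \<ge> T \<longrightarrow>
            \<bar>SUP \<sigma>\<in>\<Sigma>. semidist (U \<sigma> t \<tau> ` C) K\<bar> < ereal e))"

definition unif_asymp_compact ::
  "('s \<Rightarrow> real \<Rightarrow> real \<Rightarrow> 'a::metric_space \<Rightarrow> 'a) \<Rightarrow> 's set \<Rightarrow> bool" where
  "unif_asymp_compact U \<Sigma> \<longleftrightarrow> (\<exists>K. compact K \<and> unif_attracting U \<Sigma> K)"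

definition seq_collection ::
  "('s \<Rightarrow> real \<Rightarrow> real \<Rightarrow> 'a::metric_space \<Rightarrow> 'a) \<Rightarrow> 's set \<Rightarrow> (nat \<Rightarrow> 'a) set" where
  "seq_collection U \<Sigma> = {y. \<exists>x \<sigma> t \<tau>. bounded (range x) \<and> (\<forall>n. \<sigma> n \<in> \<Sigma>) \<and>
       (\<forall>n. \<tau> n \<le> t n) \<and> filterlim (\<lambda>n. t n - \<tau> n) at_top sequentially \<and>
       (\<forall>n. y n = U (\<sigma> n) (t n) (\<tau> n) (x n))}"

definition Astar ::
  "('s \<Rightarrow> real \<Rightarrow> real \<Rightarrow> 'a::metric_space \<Rightarrow> 'a) \<Rightarrow> 's set \<Rightarrow> 'a set" where
  "Astar U \<Sigma> = {x. \<exists>y\<in>seq_collection U \<Sigma>. \<exists>r. strict_mono r \<and> (y \<circ> r) \<longlonglongrightarrow> x}"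

end

theory Submission
  imports Defs
begin

lemma infdist_lessE: "A \<noteq> {} \<Longrightarrow> infdist x A < d \<Longrightarrow> \<exists>a\<in>A. dist x a < d"
  by (simp add: infdist_notempty cINF_less_iff)

lemma INF_ereal_infdist:
  "A \<noteq> {} \<Longrightarrow> (INF \<xi>\<in>A. ereal (dist x \<xi>)) = ereal (infdist x A)"
  using ereal_Inf'[of "dist x ` A"] by (simp add: infdist_notempty image_comp)

lemma semidist_eq: "K \<noteq> {} \<Longrightarrow> semidist B K = (SUP x\<in>B. ereal (infdist x K))"
  by (simp add: semidist_def INF_ereal_infdist)

lemma attr_ne:
  assumes "unif_attracting U \<Sigma> K"
  shows "\<Sigma> \<noteq> {} \<and> K \<noteq> {}"
proof -
  obtain T where T: "\<forall>t \<tau>. \<tau> \<le> t \<and> t - \<tau> \<ge> T \<longrightarrow>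
      \<bar>SUP \<sigma>\<in>\<Sigma>. semidist (U \<sigma> t \<tau> ` {undefined}) K\<bar> < ereal 1"
    using assms unfolding unif_attracting_def
    by (metis bounded_empty bounded_insert insert_not_empty zero_less_one)
  have "\<bar>SUP \<sigma>\<in>\<Sigma>. semidist (U \<sigma> (max T 0) 0 ` {undefined}) K\<bar> < ereal 1"
    using T by auto
  then show ?thesis
    by (cases "\<Sigma> = {}"; cases "K = {}") (auto simp: semidist_def bot_ereal_def)
qed

lemma attr_iff:
  fixes U :: "'s \<Rightarrow> real \<Rightarrow> real \<Rightarrow> 'a::metric_space \<Rightarrow> 'a"
  assumes "\<Sigma> \<noteq> {}" "K \<noteq> {}"
  shows "unif_attracting U \<Sigma> K \<longleftrightarrow> (\<forall>C. bounded C \<and> C \<noteq> {} \<longrightarrow> (\<forall>e>0. \<exists>T. \<forall>t \<tau>.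
     \<tau> \<le> t \<and> t - \<tau> \<ge> T \<longrightarrow> (\<forall>\<sigma>\<in>\<Sigma>. \<forall>x\<in>C. infdist (U \<sigma> t \<tau> x) K < e)))"
proof -
  have S: "(SUP \<sigma>\<in>\<Sigma>. semidist (U \<sigma> t \<tau> ` C) K) =
       (SUP \<sigma>\<in>\<Sigma>. SUP x\<in>C. ereal (infdist (U \<sigma> t \<tau> x) K))" for t \<tau> C
    using assms by (simp add: semidist_eq image_comp)
  have nn: "C \<noteq> {} \<Longrightarrow> 0 \<le> (SUP \<sigma>\<in>\<Sigma>. SUP x\<in>C. ereal (infdist (U \<sigma> t \<tau> x) K))" for t \<tau> C
  proof -
    assume "C \<noteq> {}"
    then obtain c where "c \<in> C" by blast
    obtain s where "s \<in> \<Sigma>" using assms by blast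
    have "0 \<le> ereal (infdist (U s t \<tau> c) K)" by (simp add: infdist_nonneg)
    also have "\<dots> \<le> (SUP x\<in>C. ereal (infdist (U s t \<tau> x) K))" using \<open>c\<in>C\<close> by (rule SUP_upper)
    also have "\<dots> \<le> (SUP \<sigma>\<in>\<Sigma>. SUP x\<in>C. ereal (infdist (U \<sigma> t \<tau> x) K))"
      using \<open>s\<in>\<Sigma>\<close> by (rule SUP_upper)
    finally show ?thesis .
  qed
  show ?thesis
  proof
    assume A: "unif_attracting U \<Sigma> K"
    show "\<forall>C. bounded C \<and> C \<noteq> {} \<longrightarrow> (\<forall>e>0. \<exists>T. \<forall>t \<tau>.
     \<tau> \<le> t \<and> t - \<tau> \<ge> T \<longrightarrow> (\<forall>\<sigma>\<in>\<Sigma>. \<forall>x\<in>C. infdist (U \<sigma> t \<tau> x) K < e))"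
    proof (intro allI impI)
      fix C :: "'a set" and e :: real
      assume C: "bounded C \<and> C \<noteq> {}" and e: "e > 0"
      then obtain T where T: "\<forall>t \<tau>. \<tau> \<le> t \<and> t - \<tau> \<ge> T \<longrightarrow>
            \<bar>SUP \<sigma>\<in>\<Sigma>. semidist (U \<sigma> t \<tau> ` C) K\<bar> < ereal e"
        using A unfolding unif_attracting_def by blast
      show "\<exists>T. \<forall>t \<tau>. \<tau> \<le> t \<and> t - \<tau> \<ge> T \<longrightarrow> (\<forall>\<sigma>\<in>\<Sigma>. \<forall>x\<in>C. infdist (U \<sigma> t \<tau> x) K < e)"
      proof (intro exI allI impI ballI)
        fix t \<tau> \<sigma> x assume h: "\<tau> \<le> t \<and> t - \<tau> \<ge> T" "\<sigma> \<in> \<Sigma>" "x \<in> C"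
        have "ereal (infdist (U \<sigma> t \<tau> x) K) \<le> (SUP x\<in>C. ereal (infdist (U \<sigma> t \<tau> x) K))"
          using h(3) by (rule SUP_upper)
        also have "\<dots> \<le> (SUP \<sigma>\<in>\<Sigma>. SUP x\<in>C. ereal (infdist (U \<sigma> t \<tau> x) K))"
          using h(2) by (rule SUP_upper)
        also have "\<dots> < ereal e"
        proof -
          have "\<bar>SUP \<sigma>\<in>\<Sigma>. semidist (U \<sigma> t \<tau> ` C) K\<bar> < ereal e" using T h(1) by blast
          then show ?thesis using nn[of C t \<tau>] C unfolding S by simp
        qed
        finally show "infdist (U \<sigma> t \<tau> x) K < e" by simp
      qed
    qed
  next
    assume B: "\<forall>C. bounded C \<and> C \<noteq> {} \<longrightarrow> (\<forall>e>0. \<exists>T. \<forall>t \<tau>.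
     \<tau> \<le> t \<and> t - \<tau> \<ge> T \<longrightarrow> (\<forall>\<sigma>\<in>\<Sigma>. \<forall>x\<in>C. infdist (U \<sigma> t \<tau> x) K < e))"
    show "unif_attracting U \<Sigma> K"
      unfolding unif_attracting_def
    proof (intro allI impI)
      fix C :: "'a set" and e :: real
      assume C: "bounded C \<and> C \<noteq> {}" and e: "e > 0"
      then obtain T where T: "\<forall>t \<tau>. \<tau> \<le> t \<and> t - \<tau> \<ge> T \<longrightarrow> (\<forall>\<sigma>\<in>\<Sigma>. \<forall>x\<in>C. infdist (U \<sigma> t \<tau> x) K < e/2)"
        using B by (meson half_gt_zero)
      show "\<exists>T. \<forall>t \<tau>. \<tau> \<le> t \<and> t - \<tau> \<ge> T \<longrightarrow> \<bar>SUP \<sigma>\<in>\<Sigma>. semidist (U \<sigma> t \<tau> ` C) K\<bar> < ereal e"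
      proof (intro exI allI impI)
        fix t \<tau> assume h: "\<tau> \<le> t \<and> t - \<tau> \<ge> T"
        have "(SUP \<sigma>\<in>\<Sigma>. SUP x\<in>C. ereal (infdist (U \<sigma> t \<tau> x) K)) \<le> ereal (e/2)"
          using T h by (intro SUP_least) (auto simp: less_imp_le)
        also have "\<dots> < ereal e" using e by simp
        finally show "\<bar>SUP \<sigma>\<in>\<Sigma>. semidist (U \<sigma> t \<tau> ` C) K\<bar> < ereal e"
          using nn[of C t \<tau>] C by (simp add: S)
      qed
    qed
  qed
qed


theorem proposition2p11:
  fixes U :: "'s::metric_space \<Rightarrow> real \<Rightarrow> real \<Rightarrow> 'a::metric_space \<Rightarrow> 'a"
    and \<Sigma> :: "'s set"
  assumes "\<forall>\<sigma>\<in>\<Sigma>. process (U \<sigma>)"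
    and "unif_asymp_compact U \<Sigma>"
  shows "compact (Astar U \<Sigma>) \<and> unif_attracting U \<Sigma> (Astar U \<Sigma>)"
proof -
  obtain K where K: "compact K" "unif_attracting U \<Sigma> K"
    using assms(2) unfolding unif_asymp_compact_def by blast
  have SigNE: "\<Sigma> \<noteq> {}" and KNE: "K \<noteq> {}" using attr_ne[OF K(2)] by auto
  have KA: "\<exists>T. \<forall>t \<tau>. \<tau> \<le> t \<and> t - \<tau> \<ge> T \<longrightarrow> (\<forall>\<sigma>\<in>\<Sigma>. \<forall>x\<in>C. infdist (U \<sigma> t \<tau> x) K < e)"
    if "bounded C" "C \<noteq> {}" "e > 0" for C e
    using K(2) attr_iff[OF SigNE KNE, of U] that by blast
  have Kcl: "closed K" using K(1) by (rule compact_imp_closed)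
  have toK: "(\<lambda>n. infdist (y n) K) \<longlonglongrightarrow> 0" if y: "y \<in> seq_collection U \<Sigma>" for y
  proof -
    obtain x \<sigma> t \<tau> where h: "bounded (range x)" "\<forall>n. \<sigma> n \<in> \<Sigma>" "\<forall>n. \<tau> n \<le> t n"
      "filterlim (\<lambda>n. t n - \<tau> n) at_top sequentially" "\<forall>n. y n = U (\<sigma> n) (t n) (\<tau> n) (x n)"
      using y unfolding seq_collection_def by blast
    show ?thesis
    proof (rule order_tendstoI)
      fix a :: real assume "a < 0"
      then show "eventually (\<lambda>n. a < infdist (y n) K) sequentially"
        by (intro always_eventually allI) (rule less_le_trans[OF \<open>a < 0\<close> infdist_nonneg])
    next
      fix a :: real assume a: "0 < a"
      obtain T where T: "\<forall>t \<tau>. \<tau> \<le> t \<and> t - \<tau> \<ge> T \<longrightarrow> (\<forall>\<sigma>\<in>\<Sigma>. \<forall>z\<in>range x. infdist (U \<sigma> t \<tau> z) K < a)"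
        using KA[OF h(1) _ a] by blast
      have "eventually (\<lambda>n. T \<le> t n - \<tau> n) sequentially"
        using h(4) by (simp add: filterlim_at_top)
      then show "eventually (\<lambda>n. infdist (y n) K < a) sequentially"
      proof eventually_elim
        case (elim n)
        have "\<tau> n \<le> t n \<and> t n - \<tau> n \<ge> T" using elim h(3) by simp
        then have "infdist (U (\<sigma> n) (t n) (\<tau> n) (x n)) K < a"
          using T[rule_format, of "\<tau> n" "t n"] h(2) by blast
        then show ?case using h(5) by simp
      qed
    qed
  qed
  have sub: "\<exists>l\<in>K. \<exists>r. strict_mono r \<and> (y \<circ> r) \<longlonglongrightarrow> l" if y: "y \<in> seq_collection U \<Sigma>" for y
  proof -
    have "\<forall>n. \<exists>k. k \<in> K \<and> dist (y n) k < infdist (y n) K + inverse (real (Suc n))"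
    proof
      fix n
      show "\<exists>k. k \<in> K \<and> dist (y n) k < infdist (y n) K + inverse (real (Suc n))"
        using infdist_lessE[OF KNE, of "y n" "infdist (y n) K + inverse (real (Suc n))"] by auto
    qed
    then have "\<exists>k. \<forall>n. k n \<in> K \<and> dist (y n) (k n) < infdist (y n) K + inverse (real (Suc n))"
      by (rule choice)
    then obtain k where k: "\<forall>n. k n \<in> K" "\<forall>n. dist (y n) (k n) < infdist (y n) K + inverse (real (Suc n))"
      by blast
    obtain l r where lr: "l \<in> K" "strict_mono r" "(k \<circ> r) \<longlonglongrightarrow> l"
      using seq_compactE[OF compact_imp_seq_compact[OF K(1)] k(1)] by blast
    have d0: "(\<lambda>n. dist (y n) (k n)) \<longlonglongrightarrow> 0"
    proof (rule tendsto_sandwich[of "\<lambda>_. 0" _ _ "\<lambda>n. infdist (y n) K + inverse (real (Suc n))"])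
      show "\<forall>\<^sub>F n in sequentially. 0 \<le> dist (y n) (k n)" by simp
      show "\<forall>\<^sub>F n in sequentially. dist (y n) (k n) \<le> infdist (y n) K + inverse (real (Suc n))"
        using k(2) less_imp_le by (intro always_eventually) blast
      show "(\<lambda>n. infdist (y n) K + inverse (real (Suc n))) \<longlonglongrightarrow> 0"
        using tendsto_add[OF toK[OF y] LIMSEQ_inverse_real_of_nat] by simp
    qed simp
    have d1: "(\<lambda>n. dist (y (r n)) (k (r n))) \<longlonglongrightarrow> 0"
      using LIMSEQ_subseq_LIMSEQ[OF d0 lr(2)] by (simp add: comp_def)
    have d2: "(\<lambda>n. dist (k (r n)) l) \<longlonglongrightarrow> 0"
      using tendsto_dist_iff[THEN iffD1, OF lr(3)] by (simp add: comp_def)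
    have d3: "(\<lambda>n. dist (y (r n)) l) \<longlonglongrightarrow> 0"
    proof (rule tendsto_sandwich[of "\<lambda>_. 0" _ _ "\<lambda>n. dist (y (r n)) (k (r n)) + dist (k (r n)) l"])
      show "\<forall>\<^sub>F n in sequentially. dist (y (r n)) l \<le> dist (y (r n)) (k (r n)) + dist (k (r n)) l"
        by (intro always_eventually allI) (rule dist_triangle)
      show "(\<lambda>n. dist (y (r n)) (k (r n)) + dist (k (r n)) l) \<longlonglongrightarrow> 0"
        using tendsto_add[OF d1 d2] by simp
    qed simp_all
    have "(y \<circ> r) \<longlonglongrightarrow> l"
      by (rule tendsto_dist_iff[THEN iffD2]) (use d3 in \<open>simp add: comp_def\<close>)
    then show ?thesis using lr by blast
  qed
  have AK: "Astar U \<Sigma> \<subseteq> K"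
  proof
    fix x assume "x \<in> Astar U \<Sigma>"
    then obtain y r where y: "y \<in> seq_collection U \<Sigma>" "strict_mono r" "(y \<circ> r) \<longlonglongrightarrow> x"
      unfolding Astar_def by blast
    have "(\<lambda>n. infdist ((y \<circ> r) n) K) \<longlonglongrightarrow> 0"
      using LIMSEQ_subseq_LIMSEQ[OF toK[OF y(1)] y(2)] by (simp add: comp_def)
    moreover have "(\<lambda>n. infdist ((y \<circ> r) n) K) \<longlonglongrightarrow> infdist x K"
      using y(3) by (rule tendsto_infdist)
    ultimately have "infdist x K = 0" using LIMSEQ_unique by blast
    then show "x \<in> K" using in_closed_iff_infdist_zero[OF Kcl KNE] by blast
  qed
  obtain s0 where s0: "s0 \<in> \<Sigma>" using SigNE by blast
  have "(\<lambda>n. U s0 (real n) 0 undefined) \<in> seq_collection U \<Sigma>"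
    unfolding seq_collection_def
    by (rule CollectI, rule exI[of _ "\<lambda>_. undefined"], rule exI[of _ "\<lambda>_. s0"],
        rule exI[of _ "\<lambda>n. real n"], rule exI[of _ "\<lambda>_. 0"])
      (simp add: s0 filterlim_real_sequentially)
  then obtain l0 r0 where "strict_mono r0" "((\<lambda>n. U s0 (real n) 0 undefined) \<circ> r0) \<longlonglongrightarrow> l0"
    "(\<lambda>n. U s0 (real n) 0 undefined) \<in> seq_collection U \<Sigma>"
    using sub by blast
  then have "l0 \<in> Astar U \<Sigma>" unfolding Astar_def by blast
  then have ANE: "Astar U \<Sigma> \<noteq> {}" by blast
  have Bnd: "bounded {z. infdist z K \<le> 1}"
  proof -
    obtain a B where aB: "\<forall>k\<in>K. dist a k \<le> B" using compact_imp_bounded[OF K(1)]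
      unfolding bounded_def by blast
    have "dist a z \<le> B + 2" if z1: "infdist z K \<le> 1" for z
    proof -
      obtain k where "k \<in> K" "dist z k < 2" using infdist_lessE[OF KNE, of z 2] z1 by auto
      moreover have "dist a k \<le> B" using aB \<open>k \<in> K\<close> by blast
      ultimately show ?thesis using dist_triangle[of a z k] by (simp add: dist_commute)
    qed
    then show ?thesis unfolding bounded_def by blast
  qed
  define S where "S N = {U \<sigma> t \<tau> z | \<sigma> t \<tau> z. \<sigma> \<in> \<Sigma> \<and> \<tau> \<le> t \<and> real N \<le> t - \<tau> \<and> infdist z K \<le> 1}"
    for N :: nat
  have AQ: "Astar U \<Sigma> = (\<Inter>N. closure (S N))"
  proof
    show "Astar U \<Sigma> \<subseteq> (\<Inter>N. closure (S N))"
    proof (intro subsetI InterI, clarify)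
      fix x N assume "x \<in> Astar U \<Sigma>"
      then obtain y r where y: "y \<in> seq_collection U \<Sigma>" "strict_mono r" "(y \<circ> r) \<longlonglongrightarrow> x"
        unfolding Astar_def by blast
      obtain xs \<sigma> t \<tau> where h: "bounded (range xs)" "\<forall>n. \<sigma> n \<in> \<Sigma>" "\<forall>n. \<tau> n \<le> t n"
        "filterlim (\<lambda>n. t n - \<tau> n) at_top sequentially" "\<forall>n. y n = U (\<sigma> n) (t n) (\<tau> n) (xs n)"
        using y(1) unfolding seq_collection_def by blast
      obtain T where T: "\<forall>t \<tau>. \<tau> \<le> t \<and> t - \<tau> \<ge> T \<longrightarrow> (\<forall>\<sigma>\<in>\<Sigma>. \<forall>z\<in>range xs. infdist (U \<sigma> t \<tau> z) K < 1)"
        using KA[OF h(1) _ zero_less_one] by blast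
      define T' where "T' = max T 0"
      show "x \<in> closure (S N)"
        unfolding closure_approachable
      proof (intro allI impI)
        fix e :: real assume e: "e > 0"
        obtain M where M: "\<forall>m\<ge>M. T' + real N \<le> t m - \<tau> m"
          using h(4) unfolding filterlim_at_top eventually_sequentially by blast
        obtain M' where M': "\<forall>n\<ge>M'. dist ((y \<circ> r) n) x < e"
          using y(3) e unfolding lim_sequentially by blast
        define n where "n = max M M'"
        define m where "m = r n"
        have mM: "m \<ge> M" unfolding m_def n_def using seq_suble[OF y(2), of "max M M'"] by simp
        have dm: "dist (y m) x < e" using M' unfolding m_def n_def by simp
        define s where "s = \<tau> m + T'"
        have ts: "\<tau> m \<le> s" "s \<le> t m" "real N \<le> t m - s"
          using M mM unfolding s_def T'_def by auto
        define z where "z = U (\<sigma> m) s (\<tau> m) (xs m)"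
        have z1: "infdist z K \<le> 1"
          using T ts h(2) unfolding z_def s_def T'_def
          by (metis (no_types, lifting) add_diff_cancel_left' less_imp_le max.cobounded1 rangeI)
        have "U (\<sigma> m) (t m) (\<tau> m) = U (\<sigma> m) (t m) s \<circ> U (\<sigma> m) s (\<tau> m)"
          using assms(1) h(2) ts unfolding process_def by blast
        then have "y m = U (\<sigma> m) (t m) s z" using h(5) unfolding z_def by simp
        then have "y m \<in> S N" unfolding S_def using h(2) ts z1 by fastforce
        then show "\<exists>y\<in>S N. dist y x < e" using dm by blast
      qed
    qed
  next
    show "(\<Inter>N. closure (S N)) \<subseteq> Astar U \<Sigma>"
    proof
      fix x assume x: "x \<in> (\<Inter>N. closure (S N))"
      have "\<forall>n. \<exists>\<sigma> t \<tau> z. \<sigma> \<in> \<Sigma> \<and> \<tau> \<le> t \<and> real n \<le> t - \<tau> \<and> infdist z K \<le> 1 \<and>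
               dist (U \<sigma> t \<tau> z) x < inverse (real (Suc n))"
      proof
        fix n
        have "x \<in> closure (S n)" using x by blast
        then obtain w where "w \<in> S n" "dist w x < inverse (real (Suc n))"
          unfolding closure_approachable by (meson inverse_positive_iff_positive of_nat_0_less_iff zero_less_Suc)
        then show "\<exists>\<sigma> t \<tau> z. \<sigma> \<in> \<Sigma> \<and> \<tau> \<le> t \<and> real n \<le> t - \<tau> \<and> infdist z K \<le> 1 \<and>
               dist (U \<sigma> t \<tau> z) x < inverse (real (Suc n))"
          unfolding S_def by blast
      qed
      then obtain \<sigma> t \<tau> z where h: "\<forall>n. \<sigma> n \<in> \<Sigma> \<and> \<tau> n \<le> t n \<and> real n \<le> t n - \<tau> n \<and> infdist (z n) K \<le> 1 \<and>
               dist (U (\<sigma> n) (t n) (\<tau> n) (z n)) x < inverse (real (Suc n))"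
        by metis
      define y where "y n = U (\<sigma> n) (t n) (\<tau> n) (z n)" for n
      have "bounded (range z)" using Bnd by (rule bounded_subset) (use h in auto)
      moreover have "filterlim (\<lambda>n. t n - \<tau> n) at_top sequentially"
        using filterlim_real_sequentially by (rule filterlim_at_top_mono) (use h in auto)
      ultimately have yc: "y \<in> seq_collection U \<Sigma>"
        unfolding seq_collection_def y_def
        by (intro CollectI exI[of _ z] exI[of _ \<sigma>] exI[of _ t] exI[of _ \<tau>]) (use h in auto)
      have "(\<lambda>n. dist (y n) x) \<longlonglongrightarrow> 0"
        by (rule tendsto_sandwich[of "\<lambda>_. 0" _ _ "\<lambda>n. inverse (real (Suc n))"])
          (use h LIMSEQ_inverse_real_of_nat in \<open>auto simp: y_def less_imp_le\<close>)
      then have "y \<longlonglongrightarrow> x" by (rule tendsto_dist_iff[THEN iffD2])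
      then have "(y \<circ> id) \<longlonglongrightarrow> x" by simp
      then show "x \<in> Astar U \<Sigma>" unfolding Astar_def using yc strict_mono_id by blast
    qed
  qed
  have Acl: "closed (Astar U \<Sigma>)" unfolding AQ by blast
  have Acomp: "compact (Astar U \<Sigma>)"
  proof -
    have "compact (K \<inter> Astar U \<Sigma>)" using K(1) Acl by blast
    then show ?thesis using AK by (simp add: Int_absorb1)
  qed
  have Aatt: "unif_attracting U \<Sigma> (Astar U \<Sigma>)"
  proof (rule ccontr)
    assume neg: "\<not> ?thesis"
    obtain C where C12: "bounded C" "C \<noteq> {}" and
      C3: "\<not> (\<forall>e>0. \<exists>T. \<forall>t \<tau>. \<tau> \<le> t \<and> t - \<tau> \<ge> T \<longrightarrow>
              (\<forall>\<sigma>\<in>\<Sigma>. \<forall>x\<in>C. infdist (U \<sigma> t \<tau> x) (Astar U \<Sigma>) < e))"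
      using neg unfolding attr_iff[OF SigNE ANE] by auto
    obtain e :: real where e: "e > 0" and
      e2: "\<not> (\<exists>T. \<forall>t \<tau>. \<tau> \<le> t \<and> t - \<tau> \<ge> T \<longrightarrow>
              (\<forall>\<sigma>\<in>\<Sigma>. \<forall>x\<in>C. infdist (U \<sigma> t \<tau> x) (Astar U \<Sigma>) < e))"
      using C3 by auto
    have C: "bounded C" "C \<noteq> {}" "e > 0" using C12 e by auto
    have bad: "\<forall>T. \<exists>t \<tau>. \<tau> \<le> t \<and> t - \<tau> \<ge> T \<and> (\<exists>\<sigma>\<in>\<Sigma>. \<exists>x\<in>C. \<not> infdist (U \<sigma> t \<tau> x) (Astar U \<Sigma>) < e)"
      using e2 by (simp add: not_less)
    then have "\<forall>n::nat. \<exists>t \<tau> \<sigma> x. \<tau> \<le> t \<and> t - \<tau> \<ge> real n \<and> \<sigma> \<in> \<Sigma> \<and> x \<in> C \<and>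
        \<not> infdist (U \<sigma> t \<tau> x) (Astar U \<Sigma>) < e" by blast
    then obtain t \<tau> \<sigma> x where h: "\<forall>n. \<tau> n \<le> t n \<and> t n - \<tau> n \<ge> real n \<and> \<sigma> n \<in> \<Sigma> \<and> x n \<in> C \<and>
        \<not> infdist (U (\<sigma> n) (t n) (\<tau> n) (x n)) (Astar U \<Sigma>) < e" by metis
    define y where "y n = U (\<sigma> n) (t n) (\<tau> n) (x n)" for n
    have "bounded (range x)" using C(1) by (rule bounded_subset) (use h in auto)
    moreover have "filterlim (\<lambda>n. t n - \<tau> n) at_top sequentially"
      using filterlim_real_sequentially by (rule filterlim_at_top_mono) (use h in auto)
    ultimately have yc: "y \<in> seq_collection U \<Sigma>"
      unfolding seq_collection_def y_def
      by (intro CollectI exI[of _ x] exI[of _ \<sigma>] exI[of _ t] exI[of _ \<tau>]) (use h in auto)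
    obtain l r where lr: "strict_mono r" "(y \<circ> r) \<longlonglongrightarrow> l" using sub[OF yc] by blast
    then have "l \<in> Astar U \<Sigma>" unfolding Astar_def using yc by blast
    have "(\<lambda>n. infdist ((y \<circ> r) n) (Astar U \<Sigma>)) \<longlonglongrightarrow> infdist l (Astar U \<Sigma>)"
      using lr(2) by (rule tendsto_infdist)
    then have "(\<lambda>n. infdist ((y \<circ> r) n) (Astar U \<Sigma>)) \<longlonglongrightarrow> 0"
      using \<open>l \<in> Astar U \<Sigma>\<close> by simp
    then have "eventually (\<lambda>n. infdist ((y \<circ> r) n) (Astar U \<Sigma>) < e) sequentially"
      using C(3) by (rule order_tendstoD)
    then obtain n where "infdist ((y \<circ> r) n) (Astar U \<Sigma>) < e"
      using eventually_sequentially by auto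
    then show False using h unfolding y_def by simp
  qed
  show ?thesis using Acomp Aatt by blast
qed

end
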